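(* Let $q$ be a prime, $m\geq 3$, and let $D'$ be an abelian group of order $q^{m+1}$. Suppose that: (1) $D'$ contains at least two subgroups of order $q^{m-1}$ and one of them, say $A'$, is cyclic; (2) $A'$ contains a subgroup $A_1'$ of order $q$ such that $D'/A_1'\cong C_q\times C_{q^{m-1}}$. Then $D'$ is isomorphic to $C_q\times C_{q^m}$ or to $C_{q^2}\times C_{q^{m-1}}$. Moreover, if $m\geq 4$, or if $D'$ contains a noncyclic subgroup $W'$ of order $q^2$ such that $|W'\cap A'|=q$ and $D'/W'$ is cyclic, then $D'\cong C_q\times C_{q^m}$.
   Context: $C_n$ denotes the cyclic group of order $n$. *)

theory Defs
  imports "HOL-Algebra.Algebra"
begin

abbreviation C :: "nat \<Rightarrow> int monoid" where
  "C n \<equiv> integer_mod_group n"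

end

theory Submission
  imports Defs
begin


lemma DirProd_pow: "pow (G \<times>\<times> H) (x,y) (n::nat) = (pow G x n, pow H y n)"
  by (induction n) auto

lemma (in group) idx_pow:
  assumes "finite (carrier G)" "H \<lhd> G" "x \<in> carrier G"
  shows "x [^] card (rcosets H) \<in> H"
proof -
  interpret N: normal H G by fact
  have gM: "group (G Mod H)" by (rule N.factorgroup_is_group)
  have hom: "(\<lambda>a. H #> a) \<in> hom G (G Mod H)" by (rule N.r_coset_hom_Mod)
  have cM: "carrier (G Mod H) = rcosets H" by (simp add: FactGroup_def)
  have xM: "H #> x \<in> carrier (G Mod H)" using hom assms(3) by (auto simp: hom_def)
  have "H #> (x [^] card (rcosets H)) = (H #> x) [^]\<^bsub>G Mod H\<^esub> card (rcosets H)"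
    using hom_nat_pow[OF hom assms(3) is_group gM] .
  also have "\<dots> = \<one>\<^bsub>G Mod H\<^esub>"
    using group.pow_order_eq_1[OF gM xM] cM by (simp add: order_def)
  also have "\<dots> = H" by simp
  finally show ?thesis
    using coset_join1 N.subgroup_axioms assms(3) by blast
qed

lemma (in group) sub_pow:
  assumes "finite (carrier G)" "subgroup H G" "y \<in> H"
  shows "y [^] card H = \<one>"
proof -
  have g: "group (subgroup_generated G H)" by (rule group_subgroup_generated)
  have c: "carrier (subgroup_generated G H) = H"
    using assms(2) subgroup.carrier_subgroup_generated_subgroup by blast
  have "y [^]\<^bsub>subgroup_generated G H\<^esub> order (subgroup_generated G H) = \<one>\<^bsub>subgroup_generated G H\<^esub>"
    using group.pow_order_eq_1[OF g] c assms(3) by blast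
  then have "y [^] card H = \<one>\<^bsub>subgroup_generated G H\<^esub>"
    unfolding pow_subgroup_generated order_def c .
  then show ?thesis by (simp add: subgroup_generated_def)
qed

lemma (in group) sg_sg:
  "subgroup_generated G (carrier (subgroup_generated G S)) = subgroup_generated G S"
proof -
  have "carrier (subgroup_generated G (carrier (subgroup_generated G S))) = carrier (subgroup_generated G S)"
    by (rule subgroup.carrier_subgroup_generated_subgroup[OF subgroup_subgroup_generated])
  then show ?thesis by (simp add: subgroup_generated_def)
qed

lemma (in group) cyc_iso:
  assumes x: "x \<in> carrier G" and n: "ord x = n" "n > 0"
  shows "integer_mod_group n \<cong> subgroup_generated G {x}"
proof -
  have cS: "carrier (subgroup_generated G {x}) = range (\<lambda>k::int. x [^] k)"
    using carrier_subgroup_generated_by_singleton[OF x] .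
  have cC: "carrier (integer_mod_group n) = {0..<int n}"
    using n by (simp add: carrier_integer_mod_group)
  let ?f = "\<lambda>k::int. x [^] k"
  have eq: "x [^] i = x [^] j \<longleftrightarrow> int n dvd (j - i)" for i j :: int
    using int_pow_eq[OF x] n by simp
  have hom: "?f \<in> hom (integer_mod_group n) (subgroup_generated G {x})"
  proof (rule homI)
    fix i assume "i \<in> carrier (integer_mod_group n)"
    then show "?f i \<in> carrier (subgroup_generated G {x})" using cS by auto
  next
    fix i j assume "i \<in> carrier (integer_mod_group n)" "j \<in> carrier (integer_mod_group n)"
    have "x [^] ((i + j) mod int n) = x [^] (i + j)"
      using eq by (simp add: mod_eq_dvd_iff dvd_diff_commute)
    also have "\<dots> = x [^] i \<otimes> x [^] j" by (rule int_pow_mult[OF x])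
    finally show "?f (i \<otimes>\<^bsub>integer_mod_group n\<^esub> j) = ?f i \<otimes>\<^bsub>subgroup_generated G {x}\<^esub> ?f j"
      by (simp add: subgroup_generated_def)
  qed
  have inj: "inj_on ?f {0..<int n}"
  proof (rule inj_onI)
    fix i j assume ij: "i \<in> {0..<int n}" "j \<in> {0..<int n}" "x [^] i = x [^] j"
    then have "int n dvd (j - i)" using eq by blast
    then have "(j - i) mod int n = 0" by simp
    then have "j mod int n = i mod int n" by (simp add: mod_eq_dvd_iff \<open>int n dvd (j - i)\<close>)
    then show "i = j" using ij by simp
  qed
  have img: "?f ` {0..<int n} = range ?f"
  proof
    show "range ?f \<subseteq> ?f ` {0..<int n}"
    proof
      fix y assume "y \<in> range ?f"
      then obtain k :: int where k: "y = x [^] k" by auto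
      have "int n dvd (k mod int n - k)"
        by (metis dvd_minus_iff minus_diff_eq mod_0 mod_diff_left_eq diff_self dvd_eq_mod_eq_0)
      then have "x [^] k = x [^] (k mod int n)"
        using eq by blast
      moreover have "k mod int n \<in> {0..<int n}" using n by simp
      ultimately show "y \<in> ?f ` {0..<int n}" using k by blast
    qed
  qed auto
  have "?f \<in> iso (integer_mod_group n) (subgroup_generated G {x})"
    unfolding iso_def using hom inj img cC cS by (simp add: bij_betw_def)
  then show ?thesis unfolding is_iso_def by blast
qed



lemma (in comm_group) internal:
  assumes fin: "finite (carrier G)" and x: "x \<in> carrier G" and y: "y \<in> carrier G"
    and ord: "ord x * ord y = order G"
    and disj: "carrier (subgroup_generated G {x}) \<inter> carrier (subgroup_generated G {y}) \<subseteq> {\<one>}"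
  shows "carrier (subgroup_generated G {x}) <#> carrier (subgroup_generated G {y}) = carrier G"
    and "G \<cong> integer_mod_group (ord x) \<times>\<times> integer_mod_group (ord y)"
proof -
  let ?X = "carrier (subgroup_generated G {x})" and ?Y = "carrier (subgroup_generated G {y})"
  have sX: "subgroup ?X G" and sY: "subgroup ?Y G" by (auto intro: subgroup_subgroup_generated)
  interpret ds: group_disjoint_sum G ?X ?Y
    using sX sY by (simp add: group_disjoint_sum_def is_group)
  have cX: "card ?X = ord x" using cyclic_order_is_ord[OF x] by (simp add: order_def)
  have cY: "card ?Y = ord y" using cyclic_order_is_ord[OF y] by (simp add: order_def)
  have fX: "finite ?X" "finite ?Y" using fin sX sY subgroup.subset finite_subset by metis+
  have injm: "inj_on (\<lambda>(a,b). a \<otimes> b) (?X \<times> ?Y)"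
    using disj ds.cancel by (auto simp: inj_on_def)
  have img: "?X <#> ?Y = (\<lambda>(a,b). a \<otimes> b) ` (?X \<times> ?Y)"
    by (auto simp: set_mult_def)
  have "card (?X <#> ?Y) = card ?X * card ?Y"
    using img card_image[OF injm] by (simp add: card_cartesian_product)
  moreover have sub: "?X <#> ?Y \<subseteq> carrier G"
    using sX sY by (auto simp: set_mult_def subgroup.subset[THEN subsetD])
  ultimately show eqc: "?X <#> ?Y = carrier G"
    using cX cY ord fin by (metis card_subset_eq order_def)
  have "(\<lambda>(a,b). a \<otimes> b) \<in> iso (subgroup_generated G ?X \<times>\<times> subgroup_generated G ?Y) G"
    using ds.iso_group_mul[OF comm_group_axioms] disj eqc by simp
  then have i1: "subgroup_generated G {x} \<times>\<times> subgroup_generated G {y} \<cong> G"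
    unfolding sg_sg is_iso_def by blast
  have gP: "group (subgroup_generated G {x} \<times>\<times> subgroup_generated G {y})"
    by (simp add: DirProd_group group_subgroup_generated)
  have ox: "ord x > 0" and oy: "ord y > 0" using ord_ge_1 fin x y by fastforce+
  have i2: "subgroup_generated G {x} \<times>\<times> subgroup_generated G {y} \<cong> integer_mod_group (ord x) \<times>\<times> integer_mod_group (ord y)"
    using group.DirProd_iso_trans[OF group_subgroup_generated[of "{x}"]]
      group.iso_sym[OF group_integer_mod_group cyc_iso[OF x refl ox]]
      group.iso_sym[OF group_integer_mod_group cyc_iso[OF y refl oy]]
    by blast
  show "G \<cong> integer_mod_group (ord x) \<times>\<times> integer_mod_group (ord y)"
    using iso_trans[OF group.iso_sym[OF gP i1] i2] .
qed

lemma primepow_ord: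
  fixes q d k :: nat
  assumes "Factorial_Ring.prime q" "d dvd q ^ Suc k" "\<not> d dvd q ^ k"
  shows "d = q ^ Suc k"
proof -
  obtain i where i: "i \<le> Suc k" "d = q ^ i" using assms(1,2) divides_primepow_nat by blast
  show ?thesis
  proof (cases "i = Suc k")
    case False then have "i \<le> k" using i by simp
    then have "d dvd q ^ k" using i by (simp add: le_imp_power_dvd)
    then show ?thesis using assms(3) by simp
  qed (use i in simp)
qed

lemma (in group) cyc_q_elems:
  assumes x: "x \<in> carrier G" and o: "ord x = r * q" and q: "q > 0"
    and u: "u \<in> carrier (subgroup_generated G {x})" and uq: "u [^] q = \<one>"
  shows "u \<in> (\<lambda>j::nat. x [^] (r * j)) ` {..<q}"
proof -
  obtain k :: int where k: "u = x [^] k"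
    using u carrier_subgroup_generated_by_singleton[OF x] by auto
  have "u [^] (int q) = \<one>" using uq by (simp add: int_pow_int)
  then have "x [^] (k * int q) = \<one>" using k int_pow_pow[OF x] by simp
  then have "int (r * q) dvd k * int q" using int_pow_eq_id[OF x] o by simp
  then have "int r dvd k" using q by simp
  then obtain t where t: "k = int r * t" by blast
  define j where "j = nat (t mod int q)"
  have j: "j < q" "int j = t mod int q" using q by (auto simp: j_def nat_less_iff)
  have "int (ord x) dvd (int r * int j - k)"
  proof -
    have "int q dvd (int j - t)" using j(2) by (metis mod_mod_trivial mod_eq_dvd_iff)
    then have "int r * int q dvd int r * (int j - t)" by simp
    then show ?thesis using o t by (simp add: right_diff_distrib)
  qed
  then have "x [^] k = x [^] (int r * int j)" using int_pow_eq[OF x] by blast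
  then have "u = x [^] (r * j)" using k by (metis int_pow_int of_nat_mult)
  then show ?thesis using j by blast
qed

lemma (in group) cyc_int:
  assumes x: "x \<in> carrier G" and o: "ord x = q ^ Suc e" and p: "Factorial_Ring.prime q"
    and K: "subgroup K G" and nk: "x [^] (q ^ e) \<notin> K"
  shows "carrier (subgroup_generated G {x}) \<inter> K \<subseteq> {\<one>}"
proof
  fix y assume y: "y \<in> carrier (subgroup_generated G {x}) \<inter> K"
  obtain i :: int where i: "y = x [^] i"
    using y carrier_subgroup_generated_by_singleton[OF x] by auto
  show "y \<in> {\<one>}"
  proof (rule ccontr)
    assume "y \<notin> {\<one>}"
    then have nd: "\<not> int (q ^ Suc e) dvd i" using i int_pow_eq_id[OF x] o by auto
    define d where "d = gcd i (int (q ^ Suc e))"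
    have "d dvd int (q ^ Suc e)" by (simp add: d_def)
    moreover have d0: "d \<ge> 0" by (simp add: d_def)
    ultimately have "nat d dvd q ^ Suc e" by (metis int_dvd_int_iff int_nat_eq)
    then obtain j where j: "j \<le> Suc e" "nat d = q ^ j" using p divides_primepow_nat by blast
    have "j \<noteq> Suc e"
    proof
      assume "j = Suc e"
      then have "d = int (q ^ Suc e)" using j d0 by (metis int_nat_eq nat_0_le)
      then have "int (q ^ Suc e) dvd i" unfolding d_def by (metis gcd_dvd1)
      then show False using nd by simp
    qed
    then have "j \<le> e" using j by simp
    then have dd: "nat d dvd q ^ e" using j by (simp add: le_imp_power_dvd)
    obtain u v where uv0: "u * i + v * int (q ^ Suc e) = d"
      using bezout_int[of i "int (q ^ Suc e)"] unfolding d_def by (elim exE)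
    then have uv: "d = u * i + v * int (q ^ Suc e)" by simp
    have "x [^] d = y [^] u \<otimes> (x [^] int (q ^ Suc e)) [^] v"
      using uv i by (simp add: int_pow_mult[OF x] int_pow_pow[OF x] mult.commute)
    also have "x [^] int (q ^ Suc e) = \<one>" unfolding int_pow_int using o x pow_ord_eq_1 by metis
    finally have xd: "x [^] d = y [^] u" using i x by simp
    have yK: "y \<in> K" using y by blast
    have "x [^] d \<in> K" using xd yK K group.int_pow_closed
      by (metis subgroup_int_pow_closed)
    obtain c where c: "q ^ e = nat d * c" using dd by blast
    have "x [^] (q ^ e) = (x [^] d) [^] (int c)"
      using c d0 by (simp add: int_pow_pow[OF x] flip: int_pow_int)
    then have "x [^] (q ^ e) \<in> K" using \<open>x [^] d \<in> K\<close> K by (metis subgroup_int_pow_closed)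
    then show False using nk by simp
  qed
qed



lemma (in group) sub_nat_pow:
  assumes "subgroup H G" "x \<in> H" shows "x [^] (k::nat) \<in> H"
  using subgroup_int_pow_closed[OF assms, of "int k"] by (simp add: int_pow_int)

lemma (in comm_group) main6:
  fixes q m :: nat and A A1 :: "'a set"
  assumes "Factorial_Ring.prime q" and "m \<ge> 3"
    and "order G = q ^ (m + 1)"
    and "subgroup A G" and "card A = q ^ (m - 1)"
    and "cyclic_group (subgroup_generated G A)"
    and "subgroup A1 G" and "A1 \<subseteq> A" and "card A1 = q"
    and "G Mod A1 \<cong> DirProd (C q) (C (q ^ (m - 1)))"
  shows "(G \<cong> DirProd (C q) (C (q ^ m)) \<or> G \<cong> DirProd (C (q ^ 2)) (C (q ^ (m - 1))))
    \<and> ((m \<ge> 4 \<or> (\<exists>W. subgroup W G \<and> card W = q ^ 2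
                       \<and> \<not> cyclic_group (subgroup_generated G W)
                       \<and> card (W \<inter> A) = q \<and> cyclic_group (G Mod W)))
        \<longrightarrow> G \<cong> DirProd (C q) (C (q ^ m)))"
proof -
  note pq = assms(1) and sA = assms(4) and sA1 = assms(7)
  define n where "n = m - 1"
  have mn: "m = Suc n" "n \<ge> 2" using assms(2) by (auto simp: n_def)
  have q1: "q > 1" using pq prime_gt_1_nat by blast
  have ordG: "order G = q ^ Suc (Suc n)" using assms(3) mn by simp
  have fin: "finite (carrier G)" using ordG q1 by (metis card.infinite order_def not_one_less_zero one_less_power zero_less_Suc)
  have cardA: "card A = q ^ n" using assms(5) n_def by simp
  obtain a where a: "a \<in> carrier G" "carrier (subgroup_generated G {a}) = A"
  proof -
    have g: "group (subgroup_generated G A)" by (rule group_subgroup_generated)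
    have cA: "carrier (subgroup_generated G A) = A"
      using subgroup.carrier_subgroup_generated_subgroup[OF sA] .
    obtain x where x: "x \<in> carrier (subgroup_generated G A)"
       "carrier (subgroup_generated G A) = range (\<lambda>k::int. x [^]\<^bsub>subgroup_generated G A\<^esub> k)"
      using assms(6) group.cyclic_group[OF g] by blast
    have "x \<in> A" "A = range (\<lambda>k::int. x [^] k)"
      using x cA int_pow_subgroup_generated[OF x(1)] by auto
    then show thesis using that carrier_subgroup_generated_by_singleton sA subgroup.subset by blast
  qed
  have orda: "ord a = q ^ n"
    using cyclic_order_is_ord[OF a(1)] a(2) cardA by (simp add: order_def)
  have A1eq: "A1 = {y \<in> A. y [^] q = \<one>}"
  proof -
    have sub1: "A1 \<subseteq> {y \<in> A. y [^] q = \<one>}"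
      using sub_pow[OF fin sA1] assms(8,9) by auto
    have "{y \<in> A. y [^] q = \<one>} \<subseteq> (\<lambda>j::nat. a [^] (q^(n-1) * j)) ` {..<q}"
    proof
      fix y assume "y \<in> {y \<in> A. y [^] q = \<one>}"
      moreover have "ord a = q^(n-1) * q" using orda mn by (metis Suc_pred' less_le_trans zero_less_numeral power_Suc2 pos2)
      ultimately show "y \<in> (\<lambda>j::nat. a [^] (q^(n-1) * j)) ` {..<q}"
        using cyc_q_elems[OF a(1), of "q^(n-1)" q y] a(2) q1 by auto
    qed
    then have "card {y \<in> A. y [^] q = \<one>} \<le> q"
      by (metis (no_types, lifting) card_image_le card_lessThan finite_lessThan le_trans card_mono finite_imageI)
    moreover have "finite {y \<in> A. y [^] q = \<one>}"
      using fin sA subgroup.subset finite_subset by (metis (no_types, lifting) mem_Collect_eq subsetI)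
    ultimately show ?thesis using sub1 assms(9) by (metis card_seteq)
  qed
  have inA1: "y \<in> A1" if "y \<in> A" "y [^] q = \<one>" for y using that A1eq by blast

  have nA1: "A1 \<lhd> G" using subgroup_imp_normal sA1 by blast
  interpret N: normal A1 G by (rule nA1)
  have gM: "group (G Mod A1)" by (rule N.factorgroup_is_group)
  let ?P = "C q \<times>\<times> C (q ^ n)"
  have gP: "group ?P" by (simp add: DirProd_group)
  obtain \<phi> where \<phi>: "\<phi> \<in> iso (G Mod A1) ?P" using assms(10) by (auto simp: is_iso_def n_def)
  have hom\<phi>: "\<phi> \<in> hom (G Mod A1) ?P" and bij\<phi>: "bij_betw \<phi> (carrier (G Mod A1)) (carrier ?P)"
    using \<phi> by (auto simp: iso_def)
  have homc: "(\<lambda>x. A1 #> x) \<in> hom G (G Mod A1)" by (rule N.r_coset_hom_Mod)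
  have inM: "A1 #> x \<in> carrier (G Mod A1)" if "x \<in> carrier G" for x
    using homc that by (auto simp: hom_def)
  have cpow: "(A1 #> x) [^]\<^bsub>G Mod A1\<^esub> (k::nat) = A1 #> (x [^] k)" if "x \<in> carrier G" for x k
    using hom_nat_pow[OF homc that is_group gM] by simp
  have \<phi>pow: "\<phi> (Xc [^]\<^bsub>G Mod A1\<^esub> (k::nat)) = (\<phi> Xc) [^]\<^bsub>C q \<times>\<times> C (q ^ n)\<^esub> k" if "Xc \<in> carrier (G Mod A1)" for Xc k
    using hom_nat_pow[OF hom\<phi> that gM gP] .
  interpret gh: group_hom "G Mod A1" ?P \<phi>
    using gM gP hom\<phi> by (simp add: group_hom_def group_hom_axioms_def)
  have \<phi>inj: "Xc = A1" if "Xc \<in> carrier (G Mod A1)" "\<phi> Xc = \<one>\<^bsub>C q \<times>\<times> C (q ^ n)\<^esub>" for Xc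
  proof -
    have "\<phi> Xc = \<phi> \<one>\<^bsub>G Mod A1\<^esub>" using that gh.hom_one by simp
    then have "Xc = \<one>\<^bsub>G Mod A1\<^esub>"
      using bij\<phi> that(1) group.is_monoid[OF gM] monoid.one_closed
      by (metis bij_betw_def inj_onD)
    then show ?thesis by simp
  qed
  have qn0: "q ^ n \<noteq> 0" "q \<noteq> 0" using q1 by auto
  have F1: "x [^] (q ^ n) \<in> A1" if x: "x \<in> carrier G" for x
  proof -
    have "\<phi> (A1 #> x) \<in> carrier ?P" using inM[OF x] hom\<phi> by (auto simp: hom_def)
    then obtain u v where uv: "\<phi> (A1 #> x) = (u, v)" by (cases "\<phi> (A1 #> x)") auto
    have "int q dvd int (q ^ n) * u" using mn by (simp add: dvd_power)
    then have e1: "\<phi> ((A1 #> x) [^]\<^bsub>G Mod A1\<^esub> (q ^ n)) = \<one>\<^bsub>C q \<times>\<times> C (q ^ n)\<^esub>"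
      using \<phi>pow[OF inM[OF x]] uv by (simp add: DirProd_pow)
    have cl: "(A1 #> x) [^]\<^bsub>G Mod A1\<^esub> (q ^ n) \<in> carrier (G Mod A1)"
      using inM[OF x] gM by (simp add: group.is_monoid monoid.nat_pow_closed)
    have "(A1 #> x) [^]\<^bsub>G Mod A1\<^esub> (q ^ n) = A1" using \<phi>inj[OF cl e1] .
    then have "A1 #> (x [^] (q ^ n)) = A1" using cpow[OF x] by simp
    then show ?thesis using coset_join1 x sA1 by blast
  qed
  obtain x0 where x0: "x0 \<in> carrier G" "x0 [^] (q ^ (n - 1)) \<notin> A1"
  proof -
    have "(0, 1) \<in> carrier ?P" using q1 mn by (simp add: carrier_integer_mod_group)
    then obtain Xc0 where Xc0: "Xc0 \<in> carrier (G Mod A1)" "\<phi> Xc0 = (0, 1)"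
      using bij\<phi> by (metis bij_betw_def imageE)
    then obtain x0 where x0: "x0 \<in> carrier G" "Xc0 = A1 #> x0" by (auto simp: carrier_FactGroup)
    have "x0 [^] (q ^ (n - 1)) \<notin> A1"
    proof
      assume "x0 [^] (q ^ (n - 1)) \<in> A1"
      then have "A1 #> x0 [^] (q ^ (n - 1)) = A1" using coset_join2 sA1 x0 by blast
      then have "Xc0 [^]\<^bsub>G Mod A1\<^esub> (q ^ (n - 1)) = \<one>\<^bsub>G Mod A1\<^esub>" using cpow x0 by simp
      then have "\<phi> Xc0 [^]\<^bsub>C q \<times>\<times> C (q ^ n)\<^esub> (q ^ (n - 1)) = \<one>\<^bsub>C q \<times>\<times> C (q ^ n)\<^esub>" using \<phi>pow Xc0 by (metis gh.hom_one)
      moreover have "int (q ^ (n - 1)) mod int (q ^ n) \<noteq> 0"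
      proof -
        have "q ^ (n - 1) < q ^ n" using q1 mn by (intro power_strict_increasing) auto
        then show ?thesis using q1 by simp
      qed
      ultimately show False using Xc0 by (simp add: DirProd_pow)
    qed
    then show thesis using that x0 by blast
  qed

  have nat_pow_eq: "x [^] (k1 * k2) = (x [^] k1) [^] k2" if "x \<in> carrier G" for x and k1 k2 :: nat
    using nat_pow_pow[OF that] by simp
  show ?thesis
  proof (cases "\<exists>g \<in> carrier G. g [^] (q ^ n) \<noteq> \<one>")
    case True
    then obtain g where g: "g \<in> carrier G" "g [^] (q ^ n) \<noteq> \<one>" by blast
    have "g [^] (q ^ Suc n) = \<one>"
    proof -
      have "(g [^] (q ^ n)) [^] q = \<one>" using F1[OF g(1)] A1eq by blast
      then show ?thesis using nat_pow_eq[OF g(1), of "q ^ n" q] by (simp add: mult.commute)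
    qed
    then have ordg: "ord g = q ^ Suc n"
      using primepow_ord[OF pq] pow_eq_id[OF g(1)] g(2) by blast
    let ?G1 = "carrier (subgroup_generated G {g})"
    have sG1: "subgroup ?G1 G" by (rule subgroup_subgroup_generated)
    have cG1: "card ?G1 = q ^ Suc n" using cyclic_order_is_ord[OF g(1)] ordg by (simp add: order_def)
    have "card (rcosets ?G1) * q ^ Suc n = q * q ^ Suc n"
      using lagrange[OF sG1] cG1 ordG by simp
    then have crc: "card (rcosets ?G1) = q" using q1 by simp
    obtain h where h: "h \<in> carrier G" "h \<notin> ?G1"
    proof -
      have "\<not> carrier G \<subseteq> ?G1"
      proof
        assume "carrier G \<subseteq> ?G1"
        then have "card (carrier G) \<le> card ?G1"
          using sG1 fin by (meson card_mono finite_subset subgroup.subset)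
        then show False using cG1 ordG q1 by (simp add: order_def)
      qed
      then show thesis using that by blast
    qed
    have "h [^] q \<in> ?G1" using idx_pow[OF fin subgroup_imp_normal[OF sG1] h(1)] crc by simp
    then obtain k :: int where k: "h [^] q = g [^] k"
      using carrier_subgroup_generated_by_singleton[OF g(1)] by auto
    have "g [^] (k * int (q ^ n)) = \<one>"
    proof -
      have "g [^] (k * int (q ^ n)) = (h [^] q) [^] (q ^ n)"
        using k int_pow_pow[OF g(1)] by (simp add: flip: int_pow_int)
      also have "\<dots> = (h [^] (q ^ n)) [^] q"
        using nat_pow_eq[OF h(1), of q "q ^ n"] nat_pow_eq[OF h(1), of "q ^ n" q] by (simp add: mult.commute)
      also have "\<dots> = \<one>" using F1[OF h(1)] A1eq by blast
      finally show ?thesis .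
    qed
    then have "int q * int (q ^ n) dvd k * int (q ^ n)" using int_pow_eq_id[OF g(1)] ordg by simp
    then have "int q dvd k" using qn0 by simp
    then obtain t where t: "k = int q * t" by blast
    define h' where "h' = h \<otimes> inv (g [^] t)"
    have h'c: "h' \<in> carrier G" using h g by (simp add: h'_def)
    have gtq: "(g [^] t) [^] q = g [^] k"
      using t int_pow_pow[OF g(1), of t "int q"] by (simp add: int_pow_int mult.commute)
    have h'q: "h' [^] q = \<one>"
    proof -
      have "h' [^] q = h [^] q \<otimes> (inv (g [^] t)) [^] q"
        unfolding h'_def using h g by (simp add: pow_mult_distrib m_comm)
      also have "\<dots> = g [^] k \<otimes> inv (g [^] k)"
        using k gtq g by (simp add: nat_pow_inv)
      finally show ?thesis using g by simp
    qed
    have h'n: "h' \<notin> ?G1"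
    proof
      assume "h' \<in> ?G1"
      moreover have "g [^] t \<in> ?G1" using carrier_subgroup_generated_by_singleton[OF g(1)] by auto
      ultimately have "h' \<otimes> g [^] t \<in> ?G1" by (rule subgroup.m_closed[OF sG1])
      moreover have "h' \<otimes> g [^] t = h" using h g by (simp add: h'_def m_assoc)
      ultimately show False using h by simp
    qed
    have ordh': "ord h' = q ^ Suc 0"
    proof -
      have "ord h' dvd q" using h'q pow_eq_id[OF h'c] by blast
      moreover have "ord h' \<noteq> 1"
        using ord_eq_1[OF h'c] h'n subgroup.one_closed[OF sG1] by auto
      ultimately show ?thesis using pq prime_nat_iff by auto
    qed
    have disj: "carrier (subgroup_generated G {h'}) \<inter> ?G1 \<subseteq> {\<one>}"
      using cyc_int[OF h'c ordh' pq sG1] h'n h'c by simp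
    have "ord h' * ord g = order G" using ordh' ordg ordG by simp
    then have "G \<cong> C (ord h') \<times>\<times> C (ord g)" using internal(2)[OF fin h'c g(1) _ disj] by blast
    then have "G \<cong> C q \<times>\<times> C (q ^ m)" using ordh' ordg mn by simp
    then show ?thesis by blast
  next
    case False
    then have allp: "g [^] (q ^ n) = \<one>" if "g \<in> carrier G" for g using that by blast

    have nn: "q ^ n = q * q ^ (n - 1)" "q ^ (n - 1) = q * q ^ (n - 2)" "q ^ n = q ^ 2 * q ^ (n - 2)"
    proof -
      obtain r where "n = Suc (Suc r)" using mn by (metis add_2_eq_Suc le_Suc_ex)
      then show "q ^ n = q * q ^ (n - 1)" "q ^ (n - 1) = q * q ^ (n - 2)" "q ^ n = q ^ 2 * q ^ (n - 2)"
        by (simp_all add: power2_eq_square)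
    qed
    have x0q: "x0 [^] q \<notin> A"
    proof
      assume xa: "x0 [^] q \<in> A"
      have "x0 [^] (q ^ (n - 1)) = (x0 [^] q) [^] (q ^ (n - 2))"
        using nat_pow_eq[OF x0(1)] nn by metis
      then have "x0 [^] (q ^ (n - 1)) \<in> A" using sub_nat_pow[OF sA xa] by simp
      moreover have "(x0 [^] (q ^ (n - 1))) [^] q = \<one>"
        using nat_pow_eq[OF x0(1), of "q ^ (n - 1)" q] allp[OF x0(1)] nn by (simp add: mult.commute)
      ultimately show False using inA1 x0(2) by blast
    qed
    have "card (rcosets A) * q ^ n = q ^ 2 * q ^ n"
      using lagrange[OF sA] cardA ordG by (auto simp: power2_eq_square)
    then have crc: "card (rcosets A) = q ^ 2" using q1 by simp
    have "x0 [^] (q ^ 2) \<in> A" using idx_pow[OF fin subgroup_imp_normal[OF sA] x0(1)] crc by simp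
    then obtain k :: int where k: "x0 [^] (q ^ 2) = a [^] k"
      using carrier_subgroup_generated_by_singleton[OF a(1)] a(2) by auto
    have "a [^] (k * int (q ^ (n - 2))) = \<one>"
    proof -
      have "a [^] (k * int (q ^ (n - 2))) = (x0 [^] (q ^ 2)) [^] (q ^ (n - 2))"
        using k int_pow_pow[OF a(1)] by (simp add: flip: int_pow_int)
      also have "\<dots> = \<one>" using nat_pow_eq[OF x0(1), of "q ^ 2" "q ^ (n - 2)"] allp[OF x0(1)] nn by simp
      finally show ?thesis .
    qed
    then have "int (q ^ 2) * int (q ^ (n - 2)) dvd k * int (q ^ (n - 2))"
      using int_pow_eq_id[OF a(1)] orda nn by (metis of_nat_mult)
    then have "int (q ^ 2) dvd k" using q1 by simp
    then obtain t where t: "k = int (q ^ 2) * t" by blast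
    define x' where "x' = x0 \<otimes> inv (a [^] t)"
    have x'c: "x' \<in> carrier G" using x0 a by (simp add: x'_def)
    have atp: "(a [^] t) [^] (j::nat) = a [^] (t * int j)" for j
      using int_pow_pow[OF a(1), of t "int j"] by (simp add: int_pow_int)
    have x'pow: "x' [^] (j::nat) = x0 [^] j \<otimes> inv ((a [^] t) [^] j)" for j
      unfolding x'_def using x0 a by (simp add: pow_mult_distrib m_comm nat_pow_inv)
    have x'q2: "x' [^] (q ^ 2) = \<one>"
      using x'pow[of "q ^ 2"] atp[of "q ^ 2"] k t a by (simp add: mult.commute)
    have x'qn: "x' [^] q \<notin> A"
    proof
      assume "x' [^] q \<in> A"
      moreover have "(a [^] t) [^] q \<in> A"
        using a by (metis carrier_subgroup_generated_by_singleton rangeI sA sub_nat_pow)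
      ultimately have "x' [^] q \<otimes> (a [^] t) [^] q \<in> A" using subgroup.m_closed[OF sA] by blast
      moreover have "x' [^] q \<otimes> (a [^] t) [^] q = x0 [^] q"
        using x'pow[of q] x0 a by (simp add: m_assoc)
      ultimately show False using x0q by simp
    qed
    have ordx': "ord x' = q ^ Suc 1"
    proof -
      have "ord x' dvd q ^ Suc 1" using x'q2 pow_eq_id[OF x'c] by (simp add: power2_eq_square)
      moreover have "\<not> ord x' dvd q ^ 1"
        using pow_eq_id[OF x'c, of q] x'qn subgroup.one_closed[OF sA] by auto
      ultimately show ?thesis using primepow_ord[OF pq] by blast
    qed
    let ?X = "carrier (subgroup_generated G {x'})"
    have disj: "?X \<inter> carrier (subgroup_generated G {a}) \<subseteq> {\<one>}"
      using cyc_int[OF x'c ordx' pq sA] x'qn a(2) by simp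
    have oo: "ord x' * ord a = order G" using ordx' orda ordG by (simp add: power_add flip: power_Suc2)
    have dec: "?X <#> A = carrier G" using internal(1)[OF fin x'c a(1) oo disj] a(2) by simp
    have "G \<cong> C (ord x') \<times>\<times> C (ord a)" using internal(2)[OF fin x'c a(1) oo disj] .
    then have iso2: "G \<cong> C (q ^ 2) \<times>\<times> C (q ^ (m - 1))" using ordx' orda n_def by (simp add: power2_eq_square)
    have sX: "subgroup ?X G" by (rule subgroup_subgroup_generated)
    have cX: "card ?X = q ^ 2" using cyclic_order_is_ord[OF x'c] ordx' by (simp add: order_def power2_eq_square)
    have decomp: "\<exists>u \<in> ?X. \<exists>v \<in> A. y = u \<otimes> v" if "y \<in> carrier G" for y
    proof -
      have "y \<in> ?X <#> A" using dec that by simp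
      then show ?thesis unfolding set_mult_def by blast
    qed
    have notcase: False if hyp: "m \<ge> 4 \<or> (\<exists>W. subgroup W G \<and> card W = q ^ 2
                       \<and> \<not> cyclic_group (subgroup_generated G W)
                       \<and> card (W \<inter> A) = q \<and> cyclic_group (G Mod W))"
    proof (cases "m \<ge> 4")
      case True
      then have n3: "n \<ge> 3" using mn by simp
      obtain u v where uv: "u \<in> ?X" "v \<in> A" "x0 = u \<otimes> v" using decomp[OF x0(1)] by blast
      have uc: "u \<in> carrier G" "v \<in> carrier G" using uv sX sA subgroup.subset by blast+
      have u2: "u [^] (q ^ 2) = \<one>" using sub_pow[OF fin sX uv(1)] cX by simp
      obtain r where r: "n - 1 = 2 + r" using n3 by (intro that[of "n - 3"]) simp
      have "u [^] (q ^ (n - 1)) = (u [^] (q ^ 2)) [^] (q ^ r)"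
        using nat_pow_eq[OF uc(1), of "q ^ 2" "q ^ r"] r by (simp add: power_add power2_eq_square mult.assoc)
      then have u1: "u [^] (q ^ (n - 1)) = \<one>" using u2 by simp
      have "x0 [^] (q ^ (n - 1)) = u [^] (q ^ (n - 1)) \<otimes> v [^] (q ^ (n - 1))"
        using uv(3) uc by (simp add: pow_mult_distrib m_comm)
      then have "x0 [^] (q ^ (n - 1)) = v [^] (q ^ (n - 1))" using u1 uc by simp
      then have "x0 [^] (q ^ (n - 1)) \<in> A" using sub_nat_pow[OF sA uv(2)] by simp
      moreover have "(x0 [^] (q ^ (n - 1))) [^] q = \<one>"
        using nat_pow_eq[OF x0(1), of "q ^ (n - 1)" q] allp[OF x0(1)] nn by (simp add: mult.commute)
      ultimately show False using inA1 x0(2) by blast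
    next
      case False
      then have n2: "n = 2" using mn by simp
      from hyp False obtain W where W: "subgroup W G" "card W = q ^ 2"
          "\<not> cyclic_group (subgroup_generated G W)" "cyclic_group (G Mod W)" by auto
      have finW: "finite W" using W(1) fin subgroup.subset finite_subset by blast
      have Wq: "w [^] q = \<one>" if w: "w \<in> W" for w
      proof (rule ccontr)
        assume ne: "w [^] q \<noteq> \<one>"
        have wc: "w \<in> carrier G" using W(1) w subgroup.subset by blast
        have "w [^] (q ^ Suc 1) = \<one>" using sub_pow[OF fin W(1) w] W(2) by (simp add: power2_eq_square)
        then have ow: "ord w = q ^ Suc 1"
          using primepow_ord[OF pq, of "ord w" 1] pow_eq_id[OF wc] ne by simp
        let ?Wg = "carrier (subgroup_generated G {w})"
        have "?Wg \<subseteq> W"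
          using carrier_subgroup_generated_by_singleton[OF wc] subgroup_int_pow_closed[OF W(1) w] by auto
        moreover have "card ?Wg = q ^ 2" using cyclic_order_is_ord[OF wc] ow by (simp add: order_def power2_eq_square)
        ultimately have "?Wg = W" using card_subset_eq finW W(2) by metis
        then have WW: "W = range (\<lambda>k::int. w [^] k)" using carrier_subgroup_generated_by_singleton[OF wc] by simp
        have cW: "carrier (subgroup_generated G W) = W"
          using subgroup.carrier_subgroup_generated_subgroup[OF W(1)] .
        have wW: "w \<in> carrier (subgroup_generated G W)" using cW w by simp
        have "carrier (subgroup_generated G W) = range (\<lambda>k::int. w [^]\<^bsub>subgroup_generated G W\<^esub> k)"
          using WW cW int_pow_subgroup_generated[OF wW] by simp
        then have "cyclic_group (subgroup_generated G W)"
          using group.cyclic_group[OF group_subgroup_generated] wW by blast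
        with W(3) show False by simp
      qed
      let ?Dq = "{y \<in> carrier G. y [^] q = \<one>}"
      let ?U = "(\<lambda>j::nat. x' [^] (q * j)) ` {..<q}" and ?V = "(\<lambda>j::nat. a [^] (q * j)) ` {..<q}"
      have Dqsub: "?Dq \<subseteq> (\<lambda>(u,v). u \<otimes> v) ` (?U \<times> ?V)"
      proof
        fix y assume y: "y \<in> ?Dq"
        obtain u v where uv: "u \<in> ?X" "v \<in> A" "y = u \<otimes> v" using decomp y by blast
        have uc: "u \<in> carrier G" "v \<in> carrier G" using uv sX sA subgroup.subset by blast+
        have e1: "u [^] q \<otimes> v [^] q = \<one>" using y uv uc by (simp add: pow_mult_distrib m_comm)
        have e2: "u [^] q = inv (v [^] q)"
        proof -
          have "u [^] q = (u [^] q \<otimes> v [^] q) \<otimes> inv (v [^] q)" using uc by (simp add: m_assoc)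
          then show ?thesis using e1 uc by simp
        qed
        have "u [^] q \<in> ?X" using sub_nat_pow[OF sX uv(1)] .
        moreover have "inv (v [^] q) \<in> A" using sub_nat_pow[OF sA uv(2)] subgroup.m_inv_closed[OF sA] by blast
        ultimately have uq: "u [^] q = \<one>" using disj a(2) e2 by auto
        then have vq: "v [^] q = \<one>" using e2 uc by (metis inv_eq_1_iff nat_pow_closed)
        have "u \<in> ?U" using cyc_q_elems[OF x'c, of q q u] ordx' uv(1) uq q1 by simp
        moreover have "v \<in> ?V" using cyc_q_elems[OF a(1), of q q v] orda n2 a(2) uv(2) vq q1
          by (simp add: power2_eq_square)
        ultimately show "y \<in> (\<lambda>(u,v). u \<otimes> v) ` (?U \<times> ?V)" using uv(3) by force
      qed
      have "card ((\<lambda>(u,v). u \<otimes> v) ` (?U \<times> ?V)) \<le> q ^ 2"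
      proof -
        have "card ((\<lambda>(u,v). u \<otimes> v) ` (?U \<times> ?V)) \<le> card (?U \<times> ?V)" by (rule card_image_le) simp
        also have "\<dots> = card ?U * card ?V" by (simp add: card_cartesian_product)
        also have "\<dots> \<le> q * q" using card_image_le[of "{..<q}"] by (intro mult_le_mono) auto
        finally show ?thesis by (simp add: power2_eq_square)
      qed
      then have cDq: "card ?Dq \<le> q ^ 2" using Dqsub by (meson card_mono finite_imageI finite_SigmaI finite_lessThan le_trans)
      have WDq: "W \<subseteq> ?Dq" using Wq W(1) subgroup.subset by blast
      have finDq: "finite ?Dq" using fin by simp
      have WeqDq: "W = ?Dq" using card_seteq[OF finDq WDq] cDq W(2) by simp
      have gqW: "g [^] q \<in> W" if g: "g \<in> carrier G" for g
      proof -
        have "(g [^] q) [^] q = \<one>" using nat_pow_eq[OF g, of q q] allp[OF g] n2 by (simp add: power2_eq_square)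
        then show ?thesis using WeqDq g by simp
      qed
      have nW: "W \<lhd> G" using subgroup_imp_normal W(1) by blast
      interpret NW: normal W G by (rule nW)
      have gMW: "group (G Mod W)" by (rule NW.factorgroup_is_group)
      obtain Z where Z: "Z \<in> carrier (G Mod W)" "carrier (G Mod W) = range (\<lambda>k::int. Z [^]\<^bsub>G Mod W\<^esub> k)"
        using W(4) group.cyclic_group[OF gMW] by blast
      obtain z where z: "z \<in> carrier G" "Z = W #> z" using Z(1) by (auto simp: carrier_FactGroup)
      have "Z [^]\<^bsub>G Mod W\<^esub> q = W #> (z [^] q)"
        using hom_nat_pow[OF NW.r_coset_hom_Mod z(1) is_group gMW] z(2) by simp
      also have "\<dots> = W" using coset_join2[OF _ W(1) gqW[OF z(1)]] z(1) by simp
      finally have "Z [^]\<^bsub>G Mod W\<^esub> q = \<one>\<^bsub>G Mod W\<^esub>" by simp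
      then have oZ: "group.ord (G Mod W) Z dvd q" using group.pow_eq_id[OF gMW Z(1)] by blast
      have "carrier (G Mod W) \<subseteq> (\<lambda>k::int. Z [^]\<^bsub>G Mod W\<^esub> k) ` {0..<int q}"
      proof
        fix Y assume "Y \<in> carrier (G Mod W)"
        then obtain k :: int where k: "Y = Z [^]\<^bsub>G Mod W\<^esub> k" using Z(2) by auto
        have "int q dvd (k mod int q - k)" by (metis mod_eq_dvd_iff mod_mod_trivial)
        then have "int (group.ord (G Mod W) Z) dvd (k mod int q - k)"
          using oZ by (meson dvd_trans int_dvd_int_iff)
        then have "Z [^]\<^bsub>G Mod W\<^esub> k = Z [^]\<^bsub>G Mod W\<^esub> (k mod int q)"
          using group.int_pow_eq[OF gMW Z(1)] by blast
        moreover have "k mod int q \<in> {0..<int q}" using q1 by simp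
        ultimately show "Y \<in> (\<lambda>k::int. Z [^]\<^bsub>G Mod W\<^esub> k) ` {0..<int q}" using k by blast
      qed
      then have "card (carrier (G Mod W)) \<le> q"
        by (metis (no_types, lifting) card_atLeastLessThan_int card_image_le card_mono diff_zero finite_atLeastLessThan_int finite_imageI le_trans nat_int)
      moreover have "card (carrier (G Mod W)) = q ^ 2"
      proof -
        have "card (rcosets W) * q ^ 2 = q ^ 2 * q ^ 2"
          using lagrange[OF W(1)] W(2) ordG n2 by (auto simp: power2_eq_square power4_eq_xxxx)
        moreover have "q ^ 2 > 0" using q1 by simp
        ultimately have "card (rcosets W) = q ^ 2" by (metis mult_right_cancel neq0_conv)
        then show ?thesis by (simp add: FactGroup_def)
      qed
      ultimately show False using q1 by (simp add: power2_eq_square)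
    qed
    show ?thesis using iso2 notcase by blast
  qed
qed


theorem lemma6p1:
  fixes D :: "('a, 'b) monoid_scheme" and q m :: nat and A A1 :: "'a set"
  assumes "Factorial_Ring.prime q" and "m \<ge> 3"
    and "comm_group D" and "order D = q ^ (m + 1)"
    and "subgroup A D" and "card A = q ^ (m - 1)"
    and "cyclic_group (subgroup_generated D A)"
    and "\<exists>H. subgroup H D \<and> card H = q ^ (m - 1) \<and> H \<noteq> A"
    and "subgroup A1 D" and "A1 \<subseteq> A" and "card A1 = q"
    and "D Mod A1 \<cong> DirProd (C q) (C (q ^ (m - 1)))"
  shows "(D \<cong> DirProd (C q) (C (q ^ m)) \<or> D \<cong> DirProd (C (q ^ 2)) (C (q ^ (m - 1))))
    \<and> ((m \<ge> 4 \<or> (\<exists>W. subgroup W D \<and> card W = q ^ 2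
                       \<and> \<not> cyclic_group (subgroup_generated D W)
                       \<and> card (W \<inter> A) = q \<and> cyclic_group (D Mod W)))
        \<longrightarrow> D \<cong> DirProd (C q) (C (q ^ m)))"
  using comm_group.main6[OF assms(3) assms(1) assms(2) assms(4) assms(5) assms(6) assms(7)
      assms(9) assms(10) assms(11) assms(12)] .

end
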